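(* Let $(X,d_X,\mu_X)$ be an mm-space with $X=\operatorname{supp}\mu_X$ and $\operatorname{diam}X<\infty$, and let $x_0\in X$ satisfy $\sup_{x\in X}d_X(x,x_0)=\operatorname{diam}X$. Let $\xi:X\to\mathbb R$, $\xi(x):=d_X(x,x_0)$. Then $\xi_*\mu_X$ is a maximal element of $\mathcal M(X;1)$ with respect to the Lipschitz order. In particular, if $\mathcal M(X;1)$ has a maximum, then this maximum is $\xi_*\mu_X$ (up to mm-isomorphism of $(\mathbb R,|\cdot|,\cdot)$).
   Context: An mm-space is a triple $(X,d_X,\mu_X)$ where $(X,d_X)$ is a complete separable metric space and $\mu_X$ is a Borel probability measure on $X$. The 1-measurement is $\mathcal M(X;1):=\{f_*\mu_X \mid f:X\to\mathbb R \text{ is 1-Lipschitz}\}$. Two mm-spaces $X,Y$ are mm-isomorphic if there is an isometry $f:\operatorname{supp}\mu_X\to\operatorname{supp}\mu_Y$ with $f_*\mu_X=\mu_Y$. For mm-spaces, $Y\prec X$ (Lipschitz order) if there is a 1-Lipschitz map $f:\operatorname{supp}\mu_X\to\operatorname{supp}\mu_Y$ with $f_*\mu_X=\mu_Y$; this is a partial order on mm-isomorphism classes. For Borel probability measures $\mu,\nu$ on $\mathbb R$, $\mu\prec\nu$ means $(\mathbb R,|\cdot|,\mu)\prec(\mathbb R,|\cdot|,\nu)$. An element $\mu\in\mathcal M(X;1)$ is maximal if every $\nu\in\mathcal M(X;1)$ with $\mu\prec\nu$ is mm-isomorphic to $\mu$ (as spaces $(\mathbb R,|\cdot|,\cdot)$);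 it is the maximum if $\nu\prec\mu$ for all $\nu\in\mathcal M(X;1)$. *)

theory Defs
  imports "HOL-Analysis.Analysis" "HOL-Probability.Probability"
begin

text \<open>An mm-space: a complete separable metric space (the type, class polish_space)
  together with a Borel probability measure.\<close>
definition mm_space :: "'a::polish_space measure \<Rightarrow> bool" where
  "mm_space M \<longleftrightarrow> prob_space M \<and> sets M = sets borel"

definition mm_supp :: "'a::metric_space measure \<Rightarrow> 'a set" where
  "mm_supp M = {x. \<forall>U. open U \<longrightarrow> x \<in> U \<longrightarrow> emeasure M U > 0}"

definition measurement1 :: "'a::metric_space measure \<Rightarrow> real measure set" where
  "measurement1 M = {distr M borel f | f. 1-lipschitz_on UNIV f}"

text \<open>Lipschitz order: lip_le N M means N \<prec> M, i.e. there is a 1-Lipschitz map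
  f : supp M \<rightarrow> supp N with f_* M = N.\<close>
definition lip_le :: "'b::metric_space measure \<Rightarrow> 'a::metric_space measure \<Rightarrow> bool" where
  "lip_le N M \<longleftrightarrow> (\<exists>f. 1-lipschitz_on (mm_supp M) f \<and> f ` mm_supp M \<subseteq> mm_supp N
      \<and> f \<in> borel_measurable M \<and> distr M borel f = N)"

definition mm_iso :: "'a::metric_space measure \<Rightarrow> 'b::metric_space measure \<Rightarrow> bool" where
  "mm_iso M N \<longleftrightarrow> (\<exists>f. (\<forall>x\<in>mm_supp M. \<forall>y\<in>mm_supp M. dist (f x) (f y) = dist x y)
      \<and> f ` mm_supp M = mm_supp N \<and> f \<in> borel_measurable M \<and> distr M borel f = N)"

definition maximal_in :: "real measure set \<Rightarrow> real measure \<Rightarrow> bool" where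
  "maximal_in S \<mu> \<longleftrightarrow> \<mu> \<in> S \<and> (\<forall>\<nu>\<in>S. lip_le \<mu> \<nu> \<longrightarrow> mm_iso \<mu> \<nu>)"

definition maximum_in :: "real measure set \<Rightarrow> real measure \<Rightarrow> bool" where
  "maximum_in S \<mu> \<longleftrightarrow> \<mu> \<in> S \<and> (\<forall>\<nu>\<in>S. lip_le \<nu> \<mu>)"

end

theory Submission
  imports Defs
begin

lemma supp_closed: "closed (mm_supp (M::'a::metric_space measure))"
  unfolding closed_def
proof (subst open_subopen, intro ballI)
  fix x assume "x \<in> - mm_supp M"
  then obtain U where U: "open U" "x \<in> U" "\<not> 0 < emeasure M U"
    unfolding mm_supp_def by auto
  have "U \<subseteq> - mm_supp M" using U unfolding mm_supp_def by auto
  then show "\<exists>T. open T \<and> x \<in> T \<and> T \<subseteq> - mm_supp M" using U by blast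
qed

lemma supp_null:
  fixes \<nu> :: "real measure"
  assumes sets: "sets \<nu> = sets borel"
  shows "\<exists>N\<in>null_sets \<nu>. - mm_supp \<nu> \<subseteq> N"
proof -
  define I where "I = {(q::rat, r::rat). emeasure \<nu> (ball (real_of_rat q) (real_of_rat r)) = 0}"
  define B where "B = (\<lambda>(q::rat, r::rat). ball (real_of_rat q) (real_of_rat r))"
  have cI: "countable I" by (rule countable_subset[of _ UNIV]) auto
  have nI: "B i \<in> null_sets \<nu>" if "i \<in> I" for i
  proof -
    obtain q r where i: "i = (q, r)" by fastforce
    have "B i \<in> sets \<nu>" unfolding i B_def using sets by simp
    moreover have "emeasure \<nu> (B i) = 0" using that unfolding i B_def I_def by simp
    ultimately show ?thesis by (rule null_setsI[rotated])
  qed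
  have "\<Union>(B ` I) \<in> null_sets \<nu>" by (rule null_sets_UN'[OF cI nI])
  moreover have "- mm_supp \<nu> \<subseteq> \<Union>(B ` I)"
  proof
    fix x assume "x \<in> - mm_supp \<nu>"
    then obtain U where U: "open U" "x \<in> U" "\<not> 0 < emeasure \<nu> U"
      unfolding mm_supp_def by auto
    then have U0: "emeasure \<nu> U = 0" by (simp add: zero_less_iff_neq_zero)
    obtain e where e: "e > 0" "ball x e \<subseteq> U" using U open_contains_ball by blast
    obtain q where q: "q \<in> \<rat>" "x - e/2 < q" "q < x + e/2"
      using Rats_dense_in_real[of "x - e/2" "x + e/2"] e by auto
    obtain r where r: "r \<in> \<rat>" "dist x q < r" "r < e/2"
    proof -
      have "dist x q < e/2" using q unfolding dist_real_def by linarith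
      then show ?thesis using Rats_dense_in_real[of "dist x q" "e/2"] that by blast
    qed
    obtain q' where q': "q = real_of_rat q'" using q Rats_cases by blast
    obtain r' where r': "r = real_of_rat r'" using r Rats_cases by blast
    have sub: "ball q r \<subseteq> U"
    proof
      fix z assume "z \<in> ball q r"
      then have "dist x z < e" using r dist_triangle[of x z q] by (auto simp: dist_commute)
      then show "z \<in> U" using e by auto
    qed
    have "emeasure \<nu> (ball q r) \<le> emeasure \<nu> U"
      by (rule emeasure_mono[OF sub]) (use U sets in auto)
    then have "emeasure \<nu> (ball q r) = 0" using U0 by simp
    then have "(q', r') \<in> I" using q' r' unfolding I_def by simp
    moreover have "x \<in> B (q', r')" using q' r' r unfolding B_def by (simp add: dist_commute)
    ultimately show "x \<in> \<Union>(B ` I)" by blast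
  qed
  ultimately show ?thesis by blast
qed


lemma supp_distr_approx:
  fixes f :: "'a::metric_space \<Rightarrow> real"
  assumes "t \<in> mm_supp (distr M borel f)" "f \<in> borel_measurable M" "0 < e"
  shows "\<exists>x\<in>space M. dist (f x) t < e"
proof (rule ccontr)
  assume "\<not> ?thesis"
  then have "f -` ball t e \<inter> space M = {}" by (auto simp: dist_commute)
  moreover have "0 < emeasure (distr M borel f) (ball t e)"
    using assms unfolding mm_supp_def by auto
  ultimately show False using assms by (simp add: emeasure_distr)
qed

lemma in_supp_distr:
  fixes f :: "'a::metric_space \<Rightarrow> real"
  assumes supp: "mm_supp M = UNIV" and cont: "continuous_on UNIV f"
    and sets: "sets M = sets borel" and appr: "\<And>e. 0 < e \<Longrightarrow> \<exists>x. dist (f x) t < e"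
  shows "t \<in> mm_supp (distr M borel f)"
  unfolding mm_supp_def
proof (intro CollectI allI impI)
  fix U :: "real set" assume U: "open U" "t \<in> U"
  obtain e where e: "e > 0" "ball t e \<subseteq> U" using U open_contains_ball by blast
  obtain x where x: "dist (f x) t < e" using appr e by blast
  have meas: "f \<in> borel_measurable M"
    using borel_measurable_continuous_onI[OF cont] measurable_cong_sets[OF sets refl] by blast
  have sp: "space M = UNIV" using sets_eq_imp_space_eq[OF sets] by simp
  have o: "open (f -` U)" using open_vimage[OF U(1) cont] .
  have "x \<in> f -` U" using x e by (auto simp: dist_commute)
  then have "0 < emeasure M (f -` U)" using supp o unfolding mm_supp_def by blast
  then show "0 < emeasure (distr M borel f) U"
    using U meas sp by (simp add: emeasure_distr)
qed

lemma affine_supp: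
  fixes L :: "real measure"
  assumes sets: "sets L = sets borel" and s: "s * s = 1"
  shows "mm_supp (distr L borel (\<lambda>t. a + s * t)) = (\<lambda>t. a + s * t) ` mm_supp L"
proof -
  define h where "h = (\<lambda>t::real. a + s * t)"
  define h' where "h' = (\<lambda>u::real. s * (u - a))"
  have hh': "h (h' u) = u" for u unfolding h_def h'_def by (simp add: mult.assoc[symmetric] s)
  have h'h: "h' (h t) = t" for t unfolding h_def h'_def by (simp add: mult.assoc[symmetric] s)
  have ch: "isCont h x" for x unfolding h_def by (intro continuous_intros)
  have ch': "isCont h' x" for x unfolding h'_def by (intro continuous_intros)
  have mh: "h \<in> borel_measurable L" unfolding h_def using sets
    by (simp add: measurable_cong_sets[OF sets refl])
  have sp: "space L = UNIV" using sets_eq_imp_space_eq[OF sets] by simp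
  have em: "emeasure (distr L borel h) U = emeasure L (h -` U)" if "open U" for U
    using that mh sp by (simp add: emeasure_distr)
  have "mm_supp (distr L borel h) = h ` mm_supp L"
  proof
    show "mm_supp (distr L borel h) \<subseteq> h ` mm_supp L"
    proof
      fix x assume x: "x \<in> mm_supp (distr L borel h)"
      have "h' x \<in> mm_supp L" unfolding mm_supp_def
      proof (intro CollectI allI impI)
        fix V assume V: "open V" "h' x \<in> V"
        have o: "open (h' -` V)" by (rule continuous_open_vimage[OF V(1) ch'])
        have eq: "h -` (h' -` V) = V" using h'h by auto
        have "0 < emeasure (distr L borel h) (h' -` V)" using x o V unfolding mm_supp_def by auto
        then show "0 < emeasure L V" using em[OF o] eq by simp
      qed
      then show "x \<in> h ` mm_supp L" using hh'[of x] by (metis image_eqI)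
    qed
    show "h ` mm_supp L \<subseteq> mm_supp (distr L borel h)"
    proof
      fix x assume "x \<in> h ` mm_supp L"
      then obtain y where y: "y \<in> mm_supp L" "x = h y" by blast
      show "x \<in> mm_supp (distr L borel h)" unfolding mm_supp_def
      proof (intro CollectI allI impI)
        fix U assume U: "open U" "x \<in> U"
        have o: "open (h -` U)" by (rule continuous_open_vimage[OF U(1) ch])
        have "0 < emeasure L (h -` U)" using y U o unfolding mm_supp_def by auto
        then show "0 < emeasure (distr L borel h) U" using em[OF U(1)] by simp
      qed
    qed
  qed
  then show ?thesis unfolding h_def .
qed


lemma affine_iso:
  fixes L :: "real measure"
  assumes sets: "sets L = sets borel" and s: "s * s = 1"
  shows "mm_iso L (distr L borel (\<lambda>t. a + s * t)) \<and> mm_iso (distr L borel (\<lambda>t. a + s * t)) L"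
proof -
  define h where "h = (\<lambda>t::real. a + s * t)"
  define h' where "h' = (\<lambda>u::real. s * (u - a))"
  have hh': "h (h' u) = u" for u unfolding h_def h'_def by (simp add: mult.assoc[symmetric] s)
  have h'h: "h' (h t) = t" for t unfolding h_def h'_def by (simp add: mult.assoc[symmetric] s)
  have "s = 1 \<or> s = -1" using s power2_eq_1_iff[of s] by (simp add: power2_eq_square)
  then have as: "\<bar>s\<bar> = 1" by auto
  have ih: "dist (h x) (h y) = dist x y" for x y
    unfolding h_def dist_real_def by (simp add: right_diff_distrib[symmetric] abs_mult as)
  have ih': "dist (h' x) (h' y) = dist x y" for x y
    unfolding h'_def dist_real_def by (simp add: right_diff_distrib[symmetric] abs_mult as)
  have mh: "h \<in> borel_measurable L" unfolding h_def
    by (simp add: measurable_cong_sets[OF sets refl])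
  have sd: "sets (distr L borel h) = sets borel" by simp
  have mh': "h' \<in> borel_measurable (distr L borel h)" unfolding h'_def
    by (simp add: measurable_cong_sets[OF sd refl])
  have mh'b: "h' \<in> borel_measurable borel" unfolding h'_def by simp
  have supp: "mm_supp (distr L borel h) = h ` mm_supp L"
    unfolding h_def by (rule affine_supp[OF sets s])
  have "distr (distr L borel h) borel h' = distr L borel (h' \<circ> h)"
    by (rule distr_distr[OF mh'b mh])
  also have "h' \<circ> h = (\<lambda>x. x)" using h'h by auto
  also have "distr L borel (\<lambda>x. x) = L" by (rule distr_id2) (simp add: sets)
  finally have hback: "distr (distr L borel h) borel h' = L" .
  have i1: "mm_iso L (distr L borel h)" unfolding mm_iso_def
    using ih supp mh by blast
  have "h' ` mm_supp (distr L borel h) = mm_supp L" unfolding supp image_image h'h by simp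
  then have i2: "mm_iso (distr L borel h) L" unfolding mm_iso_def
    using ih' mh' hback by blast
  show ?thesis using i1 i2 unfolding h_def by blast
qed


lemma finish_distr:
  fixes \<nu> :: "real measure"
  assumes sets: "sets \<nu> = sets borel" and mg: "g \<in> borel_measurable \<nu>"
    and N: "N \<in> null_sets \<nu>" "- S \<subseteq> N" and inv: "\<And>y. y \<in> S \<Longrightarrow> a + s * g y = y"
  shows "distr (distr \<nu> borel g) borel (\<lambda>t. a + s * t) = \<nu>"
proof -
  have mh: "(\<lambda>t::real. a + s * t) \<in> borel_measurable borel" by simp
  have "distr (distr \<nu> borel g) borel (\<lambda>t. a + s * t) = distr \<nu> borel ((\<lambda>t. a + s * t) \<circ> g)"
    by (rule distr_distr[OF mh mg])
  also have "\<dots> = distr \<nu> borel (\<lambda>x. x)"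
  proof (rule distr_cong_AE)
    show "AE x in \<nu>. ((\<lambda>t. a + s * t) \<circ> g) x = x"
      by (rule AE_I'[OF N(1)]) (use N(2) inv in auto)
    show "(\<lambda>t. a + s * t) \<circ> g \<in> \<nu> \<rightarrow>\<^sub>M borel" using mh mg by (rule measurable_comp[rotated])
    show "(\<lambda>x. x) \<in> \<nu> \<rightarrow>\<^sub>M borel" by (simp add: measurable_cong_sets[OF sets refl])
  qed simp_all
  also have "\<dots> = \<nu>" by (rule distr_id2) (simp add: sets)
  finally show ?thesis .
qed

lemma core:
  fixes M :: "'a::polish_space measure" and x0 :: 'a and \<nu> :: "real measure"
  assumes mm: "mm_space M" and suppM: "mm_supp M = UNIV" and bnd: "bounded (UNIV::'a set)"
    and sup: "(SUP x. dist x x0) = diameter (UNIV::'a set)"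
    and nu: "\<nu> \<in> measurement1 M" and le: "lip_le (distr M borel (\<lambda>x. dist x x0)) \<nu>"
  shows "\<exists>a s. s * s = (1::real) \<and> \<nu> = distr (distr M borel (\<lambda>x. dist x x0)) borel (\<lambda>t. a + s * t)"
proof -
  define D where "D = diameter (UNIV::'a set)"
  define \<xi> where "\<xi> = (\<lambda>x. dist x x0)"
  define lam where "lam = distr M borel \<xi>"
  define S where "S = mm_supp \<nu>"
  have setsM: "sets M = sets borel" using mm unfolding mm_space_def by blast
  have spM: "space M = UNIV" using sets_eq_imp_space_eq[OF setsM] by simp
  obtain f where f: "1-lipschitz_on UNIV f" "\<nu> = distr M borel f"
    using nu unfolding measurement1_def by blast
  obtain g where g: "1-lipschitz_on S g" "g \<in> borel_measurable \<nu>" "distr \<nu> borel g = lam"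
    using le unfolding lip_le_def S_def lam_def \<xi>_def by blast
  have setsnu: "sets \<nu> = sets borel" using f by simp
  have spnu: "space \<nu> = UNIV" using sets_eq_imp_space_eq[OF setsnu] by simp
  have cf: "continuous_on UNIV f" using lipschitz_on_continuous_on[OF f(1)] .
  have mf: "f \<in> borel_measurable M"
    using borel_measurable_continuous_onI[OF cf] measurable_cong_sets[OF setsM refl] by blast
  obtain N where N: "N \<in> null_sets \<nu>" "- S \<subseteq> N" using supp_null[OF setsnu] unfolding S_def by blast
  have c\<xi>: "continuous_on UNIV \<xi>" unfolding \<xi>_def by (intro continuous_intros)
  have dD: "dist x y \<le> D" for x y :: 'a unfolding D_def by (rule diameter_bounded_bound[OF bnd]) auto
  have \<xi>D: "\<xi> x \<le> D" for x unfolding \<xi>_def by (rule dD)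
  have bdd: "bdd_above (range \<xi>)" using \<xi>D by (intro bdd_aboveI[of _ D]) auto
  have supD: "(SUP x. \<xi> x) = D" using sup unfolding \<xi>_def D_def .
  have zero_in: "0 \<in> mm_supp lam" unfolding lam_def
    by (rule in_supp_distr[OF suppM c\<xi> setsM]) (rule exI[of _ x0], simp add: \<xi>_def)
  have D_in: "D \<in> mm_supp lam" unfolding lam_def
  proof (rule in_supp_distr[OF suppM c\<xi> setsM])
    fix e :: real assume e: "0 < e"
    have "D - e < (SUP x. \<xi> x)" using supD e by simp
    then obtain x where "D - e < \<xi> x" using less_cSUP_iff[OF _ bdd] by auto
    then show "\<exists>x. dist (\<xi> x) D < e" using \<xi>D[of x] by (intro exI[of _ x]) (auto simp: dist_real_def)
  qed
  have hit: "\<exists>y\<in>S. dist (g y) t < e" if t: "t \<in> mm_supp lam" and e: "0 < e" for t e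
  proof (rule ccontr)
    assume nh: "\<not> ?thesis"
    have sub: "g -` ball t e \<inter> space \<nu> \<subseteq> N" using nh N(2) by (auto simp: dist_commute)
    have "g -` ball t e \<inter> space \<nu> \<in> sets \<nu>" using g(2) by measurable
    then have "g -` ball t e \<inter> space \<nu> \<in> null_sets \<nu>" using null_sets_subset[OF N(1) _ sub] by blast
    then have "emeasure \<nu> (g -` ball t e \<inter> space \<nu>) = 0" by auto
    moreover have "0 < emeasure lam (ball t e)" using t e unfolding mm_supp_def by auto
    ultimately show False using g(2) g(3)[symmetric] by (simp add: emeasure_distr)
  qed
  have Sdiam: "dist y1 y2 \<le> D" if y: "y1 \<in> S" "y2 \<in> S" for y1 y2
  proof (rule field_le_epsilon)
    fix e :: real assume e: "0 < e"
    obtain x1 where x1: "dist (f x1) y1 < e/2"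
      using supp_distr_approx[of y1 M f "e/2"] y mf e f(2) unfolding S_def by auto
    obtain x2 where x2: "dist (f x2) y2 < e/2"
      using supp_distr_approx[of y2 M f "e/2"] y mf e f(2) unfolding S_def by auto
    have "dist (f x1) (f x2) \<le> 1 * dist x1 x2" by (rule lipschitz_onD[OF f(1)]) auto
    also have "\<dots> \<le> D" using dD by simp
    finally have "dist (f x1) (f x2) \<le> D" .
    moreover have "dist y1 y2 \<le> dist y1 (f x1) + dist (f x1) (f x2) + dist (f x2) y2"
      using dist_triangle[of y1 y2 "f x1"] dist_triangle[of "f x1" y2 "f x2"] by linarith
    ultimately show "dist y1 y2 \<le> D + e" using x1 x2 by (simp add: dist_commute)
  qed
  obtain y' where y': "y' \<in> S" using hit[OF zero_in, of 1] by auto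
  have bS: "bounded S" by (rule bounded_subset[of "cball y' D"]) (use Sdiam y' in auto)
  have clS: "closed S" unfolding S_def by (rule supp_closed)
  have cg: "continuous_on S g" using lipschitz_on_continuous_on[OF g(1)] .
  have cgS: "closed (g ` S)"
    using compact_imp_closed[OF compact_continuous_image[OF cg]] bS clS
    by (simp add: compact_eq_bounded_closed)
  have in_img: "t \<in> g ` S" if "t \<in> mm_supp lam" for t
    using closed_approachable[OF cgS, of t] hit[OF that] by auto
  obtain y0 where y0: "y0 \<in> S" "g y0 = 0" using in_img[OF zero_in] by auto
  obtain yD where yD: "yD \<in> S" "g yD = D" using in_img[OF D_in] by auto
  have "dist (g yD) (g y0) \<le> 1 * dist yD y0" by (rule lipschitz_onD[OF g(1) yD(1) y0(1)])
  then have ge: "D \<le> \<bar>yD - y0\<bar>" using yD y0 by (simp add: dist_real_def)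
  have le2: "\<bar>yD - y0\<bar> \<le> D" using Sdiam[OF yD(1) y0(1)] by (simp add: dist_real_def)
  have lipg: "\<bar>g u - g v\<bar> \<le> \<bar>u - v\<bar>" if "u \<in> S" "v \<in> S" for u v
    using lipschitz_onD[OF g(1) that] by (simp add: dist_real_def)
  have Sd: "\<bar>u - v\<bar> \<le> D" if "u \<in> S" "v \<in> S" for u v
    using Sdiam[OF that] by (simp add: dist_real_def)
  show ?thesis
  proof (cases "y0 \<le> yD")
    case True
    have inv: "y0 + 1 * g y = y" if y: "y \<in> S" for y
    proof -
      have "\<bar>y - y0\<bar> \<le> D" "\<bar>y - yD\<bar> \<le> D" using Sd y y0(1) yD(1) by auto
      moreover have "\<bar>g y - g y0\<bar> \<le> \<bar>y - y0\<bar>" "\<bar>g y - g yD\<bar> \<le> \<bar>y - yD\<bar>"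
        using lipg y y0(1) yD(1) by auto
      ultimately show ?thesis using True ge le2 y0(2) yD(2) by (simp add: abs_le_iff)
    qed
    have "distr (distr \<nu> borel g) borel (\<lambda>t. y0 + 1 * t) = \<nu>"
      by (rule finish_distr[OF setsnu g(2) N inv])
    then show ?thesis using g(3) unfolding lam_def \<xi>_def by (intro exI[of _ y0] exI[of _ 1]) auto
  next
    case False
    have inv: "y0 + (-1) * g y = y" if y: "y \<in> S" for y
    proof -
      have "\<bar>y - y0\<bar> \<le> D" "\<bar>y - yD\<bar> \<le> D" using Sd y y0(1) yD(1) by auto
      moreover have "\<bar>g y - g y0\<bar> \<le> \<bar>y - y0\<bar>" "\<bar>g y - g yD\<bar> \<le> \<bar>y - yD\<bar>"
        using lipg y y0(1) yD(1) by auto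
      ultimately show ?thesis using False ge le2 y0(2) yD(2) by (simp add: abs_le_iff)
    qed
    have "distr (distr \<nu> borel g) borel (\<lambda>t. y0 + (-1) * t) = \<nu>"
      by (rule finish_distr[OF setsnu g(2) N inv])
    then show ?thesis using g(3) unfolding lam_def \<xi>_def by (intro exI[of _ y0] exI[of _ "-1"]) auto
  qed
qed


theorem corollary1p3:
  fixes M :: "'a::polish_space measure" and x0 :: 'a
  assumes "mm_space M"
    and "mm_supp M = UNIV"
    and "bounded (UNIV :: 'a set)"
    and "(SUP x. dist x x0) = diameter (UNIV :: 'a set)"
  shows "maximal_in (measurement1 M) (distr M borel (\<lambda>x. dist x x0))
    \<and> (\<forall>\<mu>. maximum_in (measurement1 M) \<mu> \<longrightarrow> mm_iso \<mu> (distr M borel (\<lambda>x. dist x x0)))"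
proof -
  define lam where "lam = distr M borel (\<lambda>x. dist x x0)"
  have setsM: "sets M = sets borel" using assms(1) unfolding mm_space_def by blast
  have setsl: "sets lam = sets borel" unfolding lam_def by simp
  have lip: "1-lipschitz_on UNIV (\<lambda>x. dist x x0)"
  proof (rule lipschitz_onI)
    fix x y :: 'a
    show "dist (dist x x0) (dist y x0) \<le> 1 * dist x y"
      using dist_triangle[of x x0 y] dist_triangle[of y x0 x]
      by (simp add: dist_real_def dist_commute abs_le_iff)
  qed simp
  have mem: "lam \<in> measurement1 M" unfolding measurement1_def lam_def using lip by blast
  have key: "mm_iso lam \<nu> \<and> mm_iso \<nu> lam" if nu: "\<nu> \<in> measurement1 M" and le: "lip_le lam \<nu>" for \<nu>
  proof -
    obtain a s where as: "s * s = (1::real)" "\<nu> = distr lam borel (\<lambda>t. a + s * t)"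
      using core[OF assms nu le[unfolded lam_def]] unfolding lam_def by blast
    show ?thesis using affine_iso[OF setsl as(1), of a] as(2) by simp
  qed
  have A: "maximal_in (measurement1 M) lam" unfolding maximal_in_def using mem key by blast
  have B: "mm_iso \<mu> lam" if "maximum_in (measurement1 M) \<mu>" for \<mu>
    using that mem key unfolding maximum_in_def by blast
  show ?thesis using A B unfolding lam_def by blast
qed

end
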